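(* Let $F$ satisfy the structure condition (S) with constants $0<\lambda\le\Lambda$ and bounded continuous $b\ge0$, $c\le0$, and $F(x,t,0,0,0)=0$. Fix $\eta\in\mathbb{R}^n$, $x_0\in\mathbb{R}^n$, $R>0$, $t_1<t_2$, and consider the inclined cylinder $$D^I=\{(x,t):|x-[x_0+\eta(t-t_1)]|<R,\ t_1<t\le t_2\}.$$ Let $u$ be a continuous viscosity subsolution (resp. supersolution) of $F(x,t,u,Du,D^2u)-\partial_tu=0$ in $D^I$ (including its upper base $t=t_2$). If $u$ attains its maximum (resp. minimum) $M$ over $D^I$ at the point $(x_0+\eta(t_2-t_1),t_2)$ and $M\ge0$ (resp. $M\le0$), then $u(x_0+\eta(t-t_1),t)=M$ for all $t\in(t_1,t_2)$.
   Context: Structure condition (S): for all $(x,t)$ in the domain, $r,s\in\mathbb{R}$, $p,q\in\mathbb{R}^n$, $M,N$ symmetric $n\times n$ matrices with $N\ge 0$, $$\lambda\,\mathrm{Tr}(N)-b(x,t)|p-q|+c(x,t)(r-s)\le F(x,t,r,p,M+N)-F(x,t,s,q,M)\le \Lambda\,\mathrm{Tr}(N)+b(x,t)|p-q|+c(x,t)(r-s).$$ *)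

theory Defs
  imports "HOL-Analysis.Analysis"
begin

text \<open>Points of space-time are pairs (x,t) with x in R^n (type real^'n) and t real.
  The operator F x t r p X, with X an n x n matrix.\<close>

definition sym_mat :: "real^'n^'n \<Rightarrow> bool" where
  "sym_mat M \<longleftrightarrow> transpose M = M"

definition psd_mat :: "real^'n^'n \<Rightarrow> bool" where
  "psd_mat N \<longleftrightarrow> (\<forall>v. 0 \<le> v \<bullet> (N *v v))"

definition structure_S ::
  "(real^'n \<Rightarrow> real \<Rightarrow> real \<Rightarrow> real^'n \<Rightarrow> real^'n^'n \<Rightarrow> real) \<Rightarrow> real \<Rightarrow> real
   \<Rightarrow> (real^'n \<Rightarrow> real \<Rightarrow> real) \<Rightarrow> (real^'n \<Rightarrow> real \<Rightarrow> real) \<Rightarrow> ((real^'n) \<times> real) set \<Rightarrow> bool" where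
  "structure_S F lam Lam b c Omega \<longleftrightarrow>
    (\<forall>x t r s p q M N. (x, t) \<in> Omega \<longrightarrow> sym_mat M \<longrightarrow> sym_mat N \<longrightarrow> psd_mat N \<longrightarrow>
       lam * trace N - b x t * norm (p - q) + c x t * (r - s) \<le> F x t r p (M + N) - F x t s q M \<and>
       F x t r p (M + N) - F x t s q M \<le> Lam * trace N + b x t * norm (p - q) + c x t * (r - s))"

definition C21_at ::
  "(real^'n \<Rightarrow> real \<Rightarrow> real) \<Rightarrow> (real^'n \<Rightarrow> real \<Rightarrow> real^'n) \<Rightarrow> (real^'n \<Rightarrow> real \<Rightarrow> real^'n^'n)
   \<Rightarrow> (real^'n \<Rightarrow> real \<Rightarrow> real) \<Rightarrow> (real^'n) \<times> real \<Rightarrow> bool" where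
  "C21_at phi phix phixx phit z \<longleftrightarrow>
    (\<exists>U. open U \<and> z \<in> U \<and>
      (\<forall>(x, t)\<in>U.
          ((\<lambda>y. phi y t) has_derivative (\<lambda>h. phix x t \<bullet> h)) (at x) \<and>
          ((\<lambda>y. phix y t) has_derivative (\<lambda>h. phixx x t *v h)) (at x) \<and>
          ((\<lambda>s. phi x s) has_real_derivative phit x t) (at t)) \<and>
      continuous_on U (\<lambda>(x, t). phixx x t) \<and>
      continuous_on U (\<lambda>(x, t). phit x t))"

text \<open>Viscosity subsolution of F(x,t,u,Du,D^2u) - u_t = 0 in the set D (local extrema are
  taken relative to D, so boundary points of D belonging to D, e.g. an upper base, are included).\<close>
definition visc_subsol ::
  "(real^'n \<Rightarrow> real \<Rightarrow> real \<Rightarrow> real^'n \<Rightarrow> real^'n^'n \<Rightarrow> real) \<Rightarrow> ((real^'n) \<times> real) set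
   \<Rightarrow> (real^'n \<Rightarrow> real \<Rightarrow> real) \<Rightarrow> bool" where
  "visc_subsol F D u \<longleftrightarrow>
    (\<forall>x0 t0 phi phix phixx phit. (x0, t0) \<in> D \<longrightarrow> C21_at phi phix phixx phit (x0, t0) \<longrightarrow>
       (\<exists>e>0. \<forall>x t. (x, t) \<in> D \<longrightarrow> dist (x, t) (x0, t0) < e \<longrightarrow>
                u x t - phi x t \<le> u x0 t0 - phi x0 t0) \<longrightarrow>
       F x0 t0 (u x0 t0) (phix x0 t0) (phixx x0 t0) - phit x0 t0 \<ge> 0)"

definition visc_supersol ::
  "(real^'n \<Rightarrow> real \<Rightarrow> real \<Rightarrow> real^'n \<Rightarrow> real^'n^'n \<Rightarrow> real) \<Rightarrow> ((real^'n) \<times> real) set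
   \<Rightarrow> (real^'n \<Rightarrow> real \<Rightarrow> real) \<Rightarrow> bool" where
  "visc_supersol F D u \<longleftrightarrow>
    (\<forall>x0 t0 phi phix phixx phit. (x0, t0) \<in> D \<longrightarrow> C21_at phi phix phixx phit (x0, t0) \<longrightarrow>
       (\<exists>e>0. \<forall>x t. (x, t) \<in> D \<longrightarrow> dist (x, t) (x0, t0) < e \<longrightarrow>
                u x t - phi x t \<ge> u x0 t0 - phi x0 t0) \<longrightarrow>
       F x0 t0 (u x0 t0) (phix x0 t0) (phixx x0 t0) - phit x0 t0 \<le> 0)"

definition inclined_cyl :: "real^'n \<Rightarrow> real^'n \<Rightarrow> real \<Rightarrow> real \<Rightarrow> real \<Rightarrow> ((real^'n) \<times> real) set" where
  "inclined_cyl eta x0 R t1 t2 =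
     {(x, t). norm (x - (x0 + (t - t1) *\<^sub>R eta)) < R \<and> t1 < t \<and> t \<le> t2}"

end

theory Submission
  imports Defs
begin

definition outer :: "real^'n \<Rightarrow> real^'n^'n" where
  "outer y = (\<chi> i j. y$i * y$j)"

lemma outer_mv: "outer y *v h = (y \<bullet> h) *\<^sub>R y"
  by (simp add: vec_eq_iff outer_def matrix_vector_mult_def inner_vec_def sum_distrib_left mult_ac)

lemma trace_outer: "trace (outer y) = y \<bullet> y"
  by (simp add: trace_def outer_def inner_vec_def)

lemma psd_outer: "psd_mat (outer y)"
  unfolding psd_mat_def outer_mv by (simp add: inner_commute)

lemma psd_scale: "psd_mat A \<Longrightarrow> 0 \<le> k \<Longrightarrow> psd_mat (k *\<^sub>R A)"
  unfolding psd_mat_def by (simp add: scaleR_matrix_vector_assoc[symmetric])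

lemma psd_id: "psd_mat (mat 1)"
  unfolding psd_mat_def by simp

lemma psd_zero: "psd_mat 0"
  unfolding psd_mat_def by simp

lemma sym_outer: "sym_mat (outer y)"
  by (simp add: sym_mat_def outer_def transpose_def vec_eq_iff mult.commute)

lemma sym_id: "sym_mat (mat 1)"
  by (simp add: sym_mat_def)

lemma sym_zero: "sym_mat 0"
  by (simp add: sym_mat_def transpose_def vec_eq_iff)

lemma sym_scale: "sym_mat A \<Longrightarrow> sym_mat (k *\<^sub>R A)"
  by (simp add: sym_mat_def transpose_def vec_eq_iff)

lemma sym_diff: "sym_mat A \<Longrightarrow> sym_mat B \<Longrightarrow> sym_mat (A - B)"
  by (simp add: sym_mat_def transpose_def vec_eq_iff)

lemma trace_scale: "trace (k *\<^sub>R (A::real^'n^'n)) = k * trace A"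
  by (simp add: trace_def sum_distrib_left)

lemma dspace:
  fixes a :: "real^'n"
  shows "((\<lambda>y. - e * g * (exp (- al * ((y - a) \<bullet> (y - a))) - Er)) has_derivative
     (\<lambda>h. ((2 * al * e * g * exp (- al * ((x - a) \<bullet> (x - a)))) *\<^sub>R (x - a)) \<bullet> h)) (at x)"
  apply (rule derivative_eq_intros refl | simp)+
  apply (simp add: inner_commute algebra_simps)
  done

lemma dspace2:
  fixes a :: "real^'n"
  shows "((\<lambda>y. (2 * al * e * g * exp (- al * ((y - a) \<bullet> (y - a)))) *\<^sub>R (y - a)) has_derivative
     (\<lambda>h. ((2 * al * e * g * exp (- al * ((x - a) \<bullet> (x - a)))) *\<^sub>R (mat 1 - (2*al) *\<^sub>R outer (x - a))) *v h)) (at x)"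
  apply (rule derivative_eq_intros refl | simp)+
  apply (simp add: scaleR_matrix_vector_assoc[symmetric] matrix_vector_mult_diff_rdistrib outer_mv inner_commute algebra_simps)
  done

lemma sq_expand:
  fixes x x0 eta :: "real^'n"
  shows "(x - (x0 + (t - t1) *\<^sub>R eta)) \<bullet> (x - (x0 + (t - t1) *\<^sub>R eta))
     = (x - x0) \<bullet> (x - x0) - 2 * (t - t1) * ((x - x0) \<bullet> eta) + (t - t1)^2 * (eta \<bullet> eta)"
  by (simp add: algebra_simps inner_commute power2_eq_square)

lemma dtime:
  fixes x x0 eta :: "real^'n"
  shows "((\<lambda>t. - e * exp (- K * (t - s)) * (exp (- al * ((x - (x0 + (t - t1) *\<^sub>R eta)) \<bullet> (x - (x0 + (t - t1) *\<^sub>R eta)))) - Er))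
     has_real_derivative
     (e * K * exp (- K * (t - s)) * (exp (- al * ((x - (x0 + (t - t1) *\<^sub>R eta)) \<bullet> (x - (x0 + (t - t1) *\<^sub>R eta)))) - Er)
      - 2 * al * e * exp (- K * (t - s)) * exp (- al * ((x - (x0 + (t - t1) *\<^sub>R eta)) \<bullet> (x - (x0 + (t - t1) *\<^sub>R eta))))
        * ((x - (x0 + (t - t1) *\<^sub>R eta)) \<bullet> eta))) (at t)"
  unfolding sq_expand
  apply (rule derivative_eq_intros refl | simp)+
  apply (simp add: algebra_simps inner_commute power2_eq_square)
  done

lemma cont_hess:
  fixes x0 eta :: "real^'n"
  shows "continuous_on UNIV (\<lambda>(x, t). (2 * al * e * exp (- K * (t - s)) * exp (- al * ((x - (x0 + (t - t1) *\<^sub>R eta)) \<bullet> (x - (x0 + (t - t1) *\<^sub>R eta))))) *\<^sub>R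
        (mat 1 - (2*al) *\<^sub>R outer (x - (x0 + (t - t1) *\<^sub>R eta))))"
  unfolding outer_def case_prod_beta
  by (intro continuous_intros)

lemma cont_time:
  fixes x0 eta :: "real^'n"
  shows "continuous_on UNIV (\<lambda>(x, t). e * K * exp (- K * (t - s)) * (exp (- al * ((x - (x0 + (t - t1) *\<^sub>R eta)) \<bullet> (x - (x0 + (t - t1) *\<^sub>R eta)))) - Er)
      - 2 * al * e * exp (- K * (t - s)) * exp (- al * ((x - (x0 + (t - t1) *\<^sub>R eta)) \<bullet> (x - (x0 + (t - t1) *\<^sub>R eta))))
        * ((x - (x0 + (t - t1) *\<^sub>R eta)) \<bullet> eta))"
  unfolding case_prod_beta
  by (intro continuous_intros)

lemma core:
  fixes F :: "real^'n \<Rightarrow> real \<Rightarrow> real \<Rightarrow> real^'n \<Rightarrow> real^'n^'n \<Rightarrow> real"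
    and b c u :: "real^'n \<Rightarrow> real \<Rightarrow> real"
    and eta x0 :: "real^'n"
  assumes Ddef: "D = inclined_cyl eta x0 R t1 t2"
    and lam: "0 < lam" "lam \<le> Lam"
    and S: "structure_S F lam Lam b c D"
    and bpos: "\<forall>(x, t)\<in>D. 0 \<le> b x t" and bB: "\<forall>(x, t)\<in>D. b x t \<le> Bb"
    and cneg: "\<forall>(x, t)\<in>D. c x t \<le> 0" and cC: "\<forall>(x, t)\<in>D. - c x t \<le> Cc"
    and F0: "\<forall>(x, t)\<in>D. F x t 0 0 0 = 0"
    and R: "0 < R" and t12: "t1 < t2"
    and ucont: "continuous_on D (\<lambda>(x, t). u x t)"
    and sub: "visc_subsol F D u" and top: "u (x0 + (t2 - t1) *\<^sub>R eta) t2 = M"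
    and le: "\<forall>(x, t)\<in>D. u x t \<le> M" and M0: "0 \<le> M"
    and s: "t1 < s" "s < t2"
  shows "u (x0 + (s - t1) *\<^sub>R eta) s = M"
proof (rule ccontr)
  assume ne: "u (x0 + (s - t1) *\<^sub>R eta) s \<noteq> M"
  define a where "a t = x0 + (t - t1) *\<^sub>R eta" for t
  have aD: "(a t, t) \<in> D" if "t1 < t" "t \<le> t2" for t
    using R that by (simp add: Ddef inclined_cyl_def a_def)
  have lt: "u (a s) s < M" using le aD[of s] ne s unfolding a_def by fastforce
  define d0 where "d0 = M - u (a s) s"
  have d0: "d0 > 0" using lt d0_def by simp
  obtain r0 where r0: "r0 > 0" "\<forall>z\<in>D. dist z (a s, s) < r0 \<longrightarrow>
      dist ((\<lambda>(x, t). u x t) z) ((\<lambda>(x, t). u x t) (a s, s)) < d0/2"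
    using ucont[unfolded continuous_on_iff] aD[of s] s d0
    by (metis half_gt_zero less_imp_le)
  define \<rho> where "\<rho> = min r0 R / 2"
  have rho: "0 < \<rho>" "\<rho> < R" "\<rho> < r0" using r0 R by (auto simp: \<rho>_def)
  have bottom: "u x s < M - d0/2" if "norm (x - a s) \<le> \<rho>" for x
  proof -
    have xD: "(x, s) \<in> D" using that rho s by (simp add: Ddef inclined_cyl_def a_def)
    have "dist (x, s) (a s, s) = norm (x - a s)" by (simp add: dist_Pair_Pair dist_norm)
    then have "dist (x, s) (a s, s) < r0" using that rho by simp
    then have "dist (u x s) (u (a s) s) < d0/2" using r0(2) xD by fastforce
    then show ?thesis unfolding d0_def dist_real_def abs_less_iff by (elim conjE) (simp add: field_simps)
  qed
  have Bb0: "0 \<le> Bb" using bpos bB aD[of t2] t12 by fastforce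
  have Cc0: "0 \<le> Cc" using cneg cC aD[of t2] t12 by fastforce
  define nn where "nn = real CARD('n)"
  have nn: "1 \<le> nn" unfolding nn_def by simp
  define H where "H = Bb + norm eta"
  have H0: "0 \<le> H" using Bb0 by (simp add: H_def)
  define al where "al = 2*(nn*Lam + H*\<rho> + 1)/(lam*\<rho>^2)"
  have al0: "0 < al" unfolding al_def using lam nn H0 rho by (intro divide_pos_pos) (auto intro!: add_nonneg_pos)
  define Er where "Er = exp(-al*\<rho>^2)"
  define Eh where "Eh = exp(-al*(\<rho>/2)^2)"
  have EhEr: "Er < Eh" unfolding Er_def Eh_def using al0 rho by (simp add: power2_eq_square)
  have Er1: "Er < 1" unfolding Er_def using al0 rho by simp
  define A where "A = 2*al*nn*Lam + 2*al*H*\<rho>"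
  have A0: "0 \<le> A" unfolding A_def using al0 nn lam H0 rho by simp
  define K where "K = Cc + A/(Eh - Er) + 1"
  define e where "e = d0/4"
  have e0: "0 < e" using d0 e_def by simp
  define E where "E x t = exp(-al*((x - a t) \<bullet> (x - a t)))" for x t
  define g where "g t = exp(-K*(t-s))" for t
  define phi where "phi x t = - e * g t * (E x t - Er)" for x t
  define phix where "phix x t = (2 * al * e * g t * E x t) *\<^sub>R (x - a t)" for x t
  define phixx where "phixx x t = (2 * al * e * g t * E x t) *\<^sub>R (mat 1 - (2*al) *\<^sub>R outer (x - a t))" for x t
  define phit where "phit x t = e * K * g t * (E x t - Er) - 2 * al * e * g t * E x t * ((x - a t) \<bullet> eta)" for x t
  define Q where "Q = {(x, t). s \<le> t \<and> t \<le> t2 \<and> norm (x - a t) \<le> \<rho>}"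
  define w where "w z = u (fst z) (snd z) - phi (fst z) (snd z)" for z
  have QD: "Q \<subseteq> D" using s rho by (auto simp: Q_def Ddef inclined_cyl_def a_def)
  have Qimg: "Q = (\<lambda>(y, t). (y + a t, t)) ` (cball 0 \<rho> \<times> {s..t2})"
  proof
    show "Q \<subseteq> (\<lambda>(y, t). (y + a t, t)) ` (cball 0 \<rho> \<times> {s..t2})"
    proof
      fix z assume "z \<in> Q"
      then obtain x t where z: "z = (x, t)" "s \<le> t" "t \<le> t2" "norm (x - a t) \<le> \<rho>" by (auto simp: Q_def)
      then show "z \<in> (\<lambda>(y, t). (y + a t, t)) ` (cball 0 \<rho> \<times> {s..t2})"
        by (intro rev_image_eqI[of "(x - a t, t)"]) auto
    qed
    show "(\<lambda>(y, t). (y + a t, t)) ` (cball 0 \<rho> \<times> {s..t2}) \<subseteq> Q" by (auto simp: Q_def)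
  qed
  have Qc: "compact Q" unfolding Qimg
    by (intro compact_continuous_image compact_Times compact_cball compact_Icc)
       (unfold a_def case_prod_beta, intro continuous_intros)
  have topQ: "(a t2, t2) \<in> Q" using s rho by (simp add: Q_def)
  have wc: "continuous_on Q w"
  proof -
    have "continuous_on Q (\<lambda>(x, t). u x t)" using ucont QD continuous_on_subset by blast
    moreover have "continuous_on Q (\<lambda>z. phi (fst z) (snd z))"
      unfolding phi_def g_def E_def a_def by (intro continuous_intros)
    ultimately show ?thesis unfolding w_def case_prod_beta by (intro continuous_on_diff)
  qed
  obtain zs where zs: "zs \<in> Q" "\<forall>z\<in>Q. w z \<le> w zs"
    using continuous_attains_sup[OF Qc _ wc] topQ by blast
  obtain xs ts where zsd: "zs = (xs, ts)" by (cases zs)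
  have zsQ: "s \<le> ts" "ts \<le> t2" "norm (xs - a ts) \<le> \<rho>" using zs(1) zsd by (auto simp: Q_def)
  have zsD: "(xs, ts) \<in> D" using zs(1) zsd QD by auto
  have Epos: "0 < E x t" for x t by (simp add: E_def)
  have Ele1: "E x t \<le> 1" for x t unfolding E_def using al0 by simp
  have EgeEr: "Er \<le> E x t" if "norm (x - a t) \<le> \<rho>" for x t
  proof -
    have "(x - a t) \<bullet> (x - a t) \<le> \<rho>^2"
      using that by (metis power2_norm_eq_inner norm_ge_zero power_mono)
    then show ?thesis unfolding E_def Er_def using al0 by simp
  qed
  have gpos: "0 < g t" for t by (simp add: g_def)
  have wtop: "w (a t2, t2) > M"
  proof -
    have "E (a t2) t2 = 1" by (simp add: E_def)
    then have "phi (a t2) t2 < 0" unfolding phi_def using e0 gpos[of t2] Er1 by (simp add: mult_pos_pos)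
    moreover have "u (a t2) t2 = M" using top by (simp add: a_def)
    ultimately show ?thesis by (simp add: w_def)
  qed
  have wzs: "w (xs, ts) > M" using zs(2) topQ wtop zsd by fastforce
  have us: "u xs ts \<le> M" using le zsD by auto
  have ts_gt: "s < ts"
  proof (rule ccontr)
    assume "\<not> s < ts"
    then have tss: "ts = s" using zsQ by simp
    have "u xs s < M - d0/2" using bottom zsQ tss by simp
    moreover have "- phi xs s \<le> e" unfolding phi_def g_def using e0 Ele1[of xs s] EgeEr[of xs s] zsQ tss Er1
      by (simp add: Er_def) (smt (verit) exp_gt_zero)
    ultimately have "w (xs, ts) < M" using tss e_def d0 by (simp add: w_def)
    then show False using wzs by simp
  qed
  have r_lt: "norm (xs - a ts) < \<rho>"
  proof (rule ccontr)
    assume "\<not> norm (xs - a ts) < \<rho>"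
    then have "norm (xs - a ts) = \<rho>" using zsQ by simp
    then have "E xs ts = Er" unfolding E_def Er_def by (simp flip: power2_norm_eq_inner)
    then have "w (xs, ts) = u xs ts" by (simp add: w_def phi_def)
    then show False using wzs us by simp
  qed
  define r where "r = norm (xs - a ts)"
  define e' where "e' = min (ts - s) ((\<rho> - r)/(1 + norm eta))"
  have e'0: "0 < e'" unfolding e'_def r_def using ts_gt r_lt
    by (simp add: add_pos_nonneg)
  have locmax: "\<forall>x t. (x, t) \<in> D \<longrightarrow> dist (x, t) (xs, ts) < e' \<longrightarrow>
                u x t - phi x t \<le> u xs ts - phi xs ts"
  proof (intro allI impI)
    fix x t assume xtD: "(x, t) \<in> D" and dxt: "dist (x, t) (xs, ts) < e'"
    have d1: "norm (x - xs) < e'" using dist_fst_le[of "(x,t)" "(xs,ts)"] dxt by (simp add: dist_norm)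
    have d2: "\<bar>ts - t\<bar> < e'" using dist_snd_le[of "(x,t)" "(xs,ts)"] dxt by (simp add: dist_real_def abs_minus_commute)
    have "t > s" using d2 e'_def by auto
    moreover have "t \<le> t2" using xtD by (simp add: Ddef inclined_cyl_def)
    moreover have "norm (x - a t) \<le> \<rho>"
    proof -
      have "x - a t = (x - xs) + (xs - a ts) + (ts - t) *\<^sub>R eta"
        by (simp add: a_def algebra_simps)
      then have "norm (x - a t) \<le> norm (x - xs) + r + \<bar>ts - t\<bar> * norm eta"
        unfolding r_def by (metis norm_triangle_le norm_triangle_ineq add_mono order_refl norm_scaleR)
      also have "\<dots> \<le> e' + r + e' * norm eta"
        using d1 d2 by (intro add_mono mult_right_mono) auto
      also have "\<dots> = e' * (1 + norm eta) + r" by (simp add: algebra_simps)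
      also have "\<dots> \<le> \<rho>"
      proof -
        have "e' * (1 + norm eta) \<le> ((\<rho> - r)/(1 + norm eta)) * (1 + norm eta)"
          by (intro mult_right_mono) (auto simp: e'_def)
        also have "\<dots> = \<rho> - r" using norm_ge_zero[of eta] by (smt (verit) nonzero_eq_divide_eq)
        finally show ?thesis by simp
      qed
      finally show ?thesis .
    qed
    ultimately have "(x, t) \<in> Q" by (simp add: Q_def)
    then show "u x t - phi x t \<le> u xs ts - phi xs ts" using zs(2) zsd by (fastforce simp: w_def)
  qed
  have C21: "C21_at phi phix phixx phit (xs, ts)"
    unfolding C21_at_def
  proof (intro exI[of _ UNIV] conjI ballI)
    fix z :: "(real^'n) \<times> real" assume "z \<in> UNIV"
    obtain x t where z: "z = (x, t)" by (cases z)
    have 1: "((\<lambda>y. phi y t) has_derivative (\<lambda>h. phix x t \<bullet> h)) (at x)"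
      unfolding phi_def phix_def E_def using dspace[of e "g t" al "a t" Er x] by simp
    have 2: "((\<lambda>y. phix y t) has_derivative (\<lambda>h. phixx x t *v h)) (at x)"
      unfolding phixx_def phix_def E_def using dspace2[of al e "g t" "a t" x] by simp
    have 3: "((\<lambda>s. phi x s) has_real_derivative phit x t) (at t)"
      unfolding phi_def phit_def E_def g_def a_def using dtime[of e K s al x x0 t1 eta Er t] by simp
    show "case z of (x, t) \<Rightarrow>
          ((\<lambda>y. phi y t) has_derivative (\<lambda>h. phix x t \<bullet> h)) (at x) \<and>
          ((\<lambda>y. phix y t) has_derivative (\<lambda>h. phixx x t *v h)) (at x) \<and>
          ((\<lambda>s. phi x s) has_real_derivative phit x t) (at t)" using 1 2 3 z by simp
  next
    show "continuous_on UNIV (\<lambda>(x, t). phixx x t)"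
      unfolding phixx_def E_def g_def a_def using cont_hess[of al e K s x0 t1 eta] by simp
  next
    show "continuous_on UNIV (\<lambda>(x, t). phit x t)"
      unfolding phit_def E_def g_def a_def using cont_time[of e K s al x0 t1 eta Er] by simp
  qed auto
  have Fv: "F xs ts (u xs ts) (phix xs ts) (phixx xs ts) - phit xs ts \<ge> 0"
    using sub[unfolded visc_subsol_def, rule_format, OF zsD C21] e'0 locmax by blast
  define y where "y = xs - a ts"
  define Es where "Es = E xs ts"
  define G where "G = g ts"
  define c0 where "c0 = 2*al*e*G*Es"
  have G0: "0 < G" using gpos G_def by simp
  have Es0: "0 < Es" using Epos Es_def by simp
  have c00: "0 < c0" unfolding c0_def using al0 e0 G0 Es0 by simp
  define P where "P = c0 *\<^sub>R (mat 1 :: real^'n^'n)"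
  define N where "N = (2*al*c0) *\<^sub>R outer y"
  define X where "X = P - N"
  define p where "p = phix xs ts"
  define us where "us = u xs ts"
  have phixx_eq: "phixx xs ts = X"
    unfolding phixx_def X_def P_def N_def c0_def Es_def G_def y_def by (simp add: algebra_simps)
  have p_eq: "p = c0 *\<^sub>R y" unfolding p_def phix_def c0_def Es_def G_def y_def by simp
  have symP: "sym_mat P" unfolding P_def by (intro sym_scale sym_id)
  have symN: "sym_mat N" unfolding N_def by (intro sym_scale sym_outer)
  have symX: "sym_mat X" unfolding X_def by (intro sym_diff symP symN)
  have psdP: "psd_mat P" unfolding P_def using c00 by (intro psd_scale psd_id) auto
  have psdN: "psd_mat N" unfolding N_def using c00 al0 by (intro psd_scale psd_outer) auto
  have tr0: "trace (0::real^'n^'n) = 0" by (simp add: trace_def)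
  note SS = S[unfolded structure_S_def, rule_format, OF zsD]
  have S1: "F xs ts us p X - F xs ts 0 0 X \<le> b xs ts * norm p + c xs ts * us"
    using SS[where M=X and N=0 and r=us and s=0 and p=p and q=0, OF symX sym_zero psd_zero] tr0 by simp
  have S2: "lam * trace N \<le> F xs ts 0 0 P - F xs ts 0 0 X"
    using SS[where M=X and N=N and r=0 and s=0 and p=0 and q=0, OF symX symN psdN] by (simp add: X_def)
  have S3: "F xs ts 0 0 P - F xs ts 0 0 0 \<le> Lam * trace P"
    using SS[where M=0 and N=P and r=0 and s=0 and p=0 and q=0, OF sym_zero symP psdP] by simp
  have F00: "F xs ts 0 0 0 = 0" using F0 zsD by auto
  have trP: "trace P = c0 * nn" unfolding P_def nn_def by (simp add: trace_scale trace_I)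
  have trN: "trace N = 2*al*c0*r^2"
    unfolding N_def r_def y_def by (simp add: trace_scale trace_outer power2_norm_eq_inner)
  have np: "norm p = c0 * r" unfolding p_eq r_def y_def using c00 by simp
  have bb: "b xs ts * norm p \<le> Bb * (c0 * r)"
    using bB zsD np c00 by (auto intro!: mult_right_mono simp: r_def)
  have cc: "c xs ts * us \<le> Cc * (e * G * (Es - Er))"
  proof -
    have "us > phi xs ts" using wzs M0 by (simp add: w_def us_def)
    then have us_gt: "us > - (e * G * (Es - Er))" by (simp add: phi_def G_def Es_def)
    have "Es \<ge> Er" using EgeEr zsQ Es_def by simp
    then have nn0: "0 \<le> e * G * (Es - Er)" using e0 G0 by simp
    have cle: "- c xs ts \<le> Cc" "c xs ts \<le> 0" using cC cneg zsD by auto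
    show ?thesis
    proof (cases "us \<ge> 0")
      case True
      then have "c xs ts * us \<le> 0" using cle by (simp add: mult_nonpos_nonneg)
      then show ?thesis using nn0 Cc0 by (smt (verit) mult_nonneg_nonneg)
    next
      case False
      have "c xs ts * us = (- c xs ts) * (- us)" by simp
      also have "\<dots> \<le> Cc * (- us)" using False cle by (intro mult_right_mono) auto
      also have "\<dots> \<le> Cc * (e * G * (Es - Er))" using us_gt Cc0 by (intro mult_left_mono) auto
      finally show ?thesis .
    qed
  qed
  have yeta: "y \<bullet> eta \<le> r * norm eta"
    using Cauchy_Schwarz_ineq2[of y eta] unfolding r_def y_def by linarith
  have phit_eq: "phit xs ts = e * K * G * (Es - Er) - c0 * (y \<bullet> eta)"
    unfolding phit_def c0_def G_def Es_def y_def by simp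
  have Fup: "F xs ts us p X \<le> Lam * (c0*nn) - lam * (2*al*c0*r^2) + Bb * (c0 * r) + Cc * (e * G * (Es - Er))"
    using S1 S2[unfolded trN] S3[unfolded trP] F00 bb cc by linarith
  have key: "0 \<le> Lam * (c0*nn) - lam * (2*al*c0*r^2) + Bb * (c0 * r) + Cc * (e * G * (Es - Er))
          - e * K * G * (Es - Er) + c0 * (y \<bullet> eta)"
    using Fv[unfolded phixx_eq phit_eq] Fup unfolding p_def us_def by linarith
  define B where "B = 2*al*nn*Lam - 4*al^2*lam*r^2 + 2*al*H*r"
  define Z where "Z = Es * B - (K - Cc) * (Es - Er)"
  have eq: "Lam * (c0*nn) - lam * (2*al*c0*r^2) + Bb * (c0 * r) + Cc * (e * G * (Es - Er))
          - e * K * G * (Es - Er) + c0 * (y \<bullet> eta)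
        = (e*G) * (Es * (2*al*nn*Lam - 4*al^2*lam*r^2 + 2*al*Bb*r + 2*al*(y \<bullet> eta)) - (K - Cc) * (Es - Er))"
    unfolding c0_def by (simp add: algebra_simps power2_eq_square)
  have "Es * (2*al*nn*Lam - 4*al^2*lam*r^2 + 2*al*Bb*r + 2*al*(y \<bullet> eta)) \<le> Es * B"
    unfolding B_def H_def using yeta Es0 al0
    by (intro mult_left_mono) (auto simp: algebra_simps)
  then have "(e*G) * (Es * (2*al*nn*Lam - 4*al^2*lam*r^2 + 2*al*Bb*r + 2*al*(y \<bullet> eta)) - (K - Cc) * (Es - Er)) \<le> (e*G) * Z"
    unfolding Z_def using e0 G0 by (intro mult_left_mono) auto
  then have "0 \<le> (e*G) * Z" using key eq by linarith
  then have Z0: "0 \<le> Z" using e0 G0 mult_le_cancel_left_pos[of "e*G" 0 Z] by simp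
  have r0': "0 \<le> r" by (simp add: r_def)
  have rr: "r < \<rho>" using r_lt r_def by simp
  have EsEr: "Er \<le> Es" using EgeEr zsQ Es_def by simp
  have dEh: "0 < Eh - Er" using EhEr by simp
  have KC: "K - Cc = A/(Eh - Er) + 1" by (simp add: K_def)
  have KC0: "0 \<le> K - Cc" using KC A0 dEh by simp
  have al_id: "al * lam * \<rho>^2 = 2*(nn*Lam + H*\<rho> + 1)"
    unfolding al_def using lam rho by (simp add: field_simps)
  have Es_r: "Es = exp (-al * r^2)" unfolding Es_def E_def r_def by (simp flip: power2_norm_eq_inner)
  have "Z < 0"
  proof (cases "\<rho>/2 \<le> r")
    case True
    have "(\<rho>/2)^2 \<le> r^2" using True rho by (intro power_mono) auto
    then have "al*lam*(\<rho>/2)^2 \<le> al*lam*r^2" using al0 lam by (intro mult_left_mono) auto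
    then have "nn*Lam + H*\<rho> + 1 \<le> 2*al*lam*r^2" using al_id by (simp add: power_divide field_simps)
    moreover have "H*r \<le> H*\<rho>" using H0 rr by (intro mult_left_mono) auto
    ultimately have "nn*Lam + H*r < 2*al*lam*r^2" by linarith
    moreover have "B = 2*al*(nn*Lam + H*r - 2*al*lam*r^2)" unfolding B_def by (simp add: algebra_simps power2_eq_square)
    ultimately have "B < 0" using al0 by (simp add: mult_pos_neg)
    then have "Es * B < 0" using Es0 by (simp add: mult_pos_neg)
    moreover have "0 \<le> (K - Cc) * (Es - Er)" using KC0 EsEr by simp
    ultimately show ?thesis unfolding Z_def by linarith
  next
    case False
    have "r^2 \<le> (\<rho>/2)^2" using False r0' by (intro power_mono) auto
    then have "Eh \<le> Es" unfolding Es_r Eh_def using al0 by simp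
    have BA: "B = A - 4*al^2*lam*r^2 - 2*al*H*(\<rho> - r)" unfolding B_def A_def by (simp add: algebra_simps)
    have "0 \<le> 4*al^2*lam*r^2" using lam by simp
    moreover have "0 \<le> 2*al*H*(\<rho> - r)" using al0 H0 rr by simp
    ultimately have "B \<le> A" using BA by linarith
    have EB: "Es * B \<le> A"
    proof (cases "B \<le> 0")
      case True
      then have "Es * B \<le> 0" using Es0 by (simp add: mult_nonneg_nonpos)
      then show ?thesis using A0 by linarith
    next
      case False
      have "Es * B \<le> 1 * B" using False Ele1[of xs ts] Es_def by (intro mult_right_mono) auto
      then show ?thesis using \<open>B \<le> A\<close> by simp
    qed
    have "(K - Cc) * (Es - Er) \<ge> (A/(Eh - Er) + 1) * (Eh - Er)"
      unfolding KC using \<open>Eh \<le> Es\<close> A0 dEh by (intro mult_left_mono) auto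
    also have "(A/(Eh - Er) + 1) * (Eh - Er) = A + (Eh - Er)" using dEh by (simp add: field_simps)
    finally show ?thesis unfolding Z_def using EB dEh by linarith
  qed
  then show False using Z0 by simp
qed

lemma neg_mv: "(- A) *v h = - (A *v (h::real^'n))"
  by (simp add: vec_eq_iff matrix_vector_mult_def sum_negf)

lemma C21_neg:
  assumes "C21_at phi phix phixx phit z"
  shows "C21_at (\<lambda>x t. - phi x t) (\<lambda>x t. - phix x t) (\<lambda>x t. - phixx x t) (\<lambda>x t. - phit x t) z"
proof -
  obtain U where U: "open U" "z \<in> U"
    "\<forall>(x, t)\<in>U. ((\<lambda>y. phi y t) has_derivative (\<lambda>h. phix x t \<bullet> h)) (at x) \<and>
          ((\<lambda>y. phix y t) has_derivative (\<lambda>h. phixx x t *v h)) (at x) \<and>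
          ((\<lambda>s. phi x s) has_real_derivative phit x t) (at t)"
    "continuous_on U (\<lambda>(x, t). phixx x t)" "continuous_on U (\<lambda>(x, t). phit x t)"
    using assms unfolding C21_at_def by blast
  show ?thesis unfolding C21_at_def
  proof (intro exI[of _ U] conjI ballI)
    fix z' assume "z' \<in> U"
    obtain x t where z': "z' = (x, t)" by (cases z')
    have d: "((\<lambda>y. phi y t) has_derivative (\<lambda>h. phix x t \<bullet> h)) (at x)"
      "((\<lambda>y. phix y t) has_derivative (\<lambda>h. phixx x t *v h)) (at x)"
      "((\<lambda>s. phi x s) has_real_derivative phit x t) (at t)"
      using U(3) \<open>z' \<in> U\<close> z' by auto
    have 1: "((\<lambda>y. - phi y t) has_derivative (\<lambda>h. (- phix x t) \<bullet> h)) (at x)"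
      using has_derivative_minus[OF d(1)] by simp
    have 2: "((\<lambda>y. - phix y t) has_derivative (\<lambda>h. (- phixx x t) *v h)) (at x)"
      using has_derivative_minus[OF d(2)] by (simp add: neg_mv)
    have 3: "((\<lambda>s. - phi x s) has_real_derivative - phit x t) (at t)"
      using DERIV_minus[OF d(3)] .
    show "case z' of (x, t) \<Rightarrow>
          ((\<lambda>y. - phi y t) has_derivative (\<lambda>h. (- phix x t) \<bullet> h)) (at x) \<and>
          ((\<lambda>y. - phix y t) has_derivative (\<lambda>h. (- phixx x t) *v h)) (at x) \<and>
          ((\<lambda>s. - phi x s) has_real_derivative - phit x t) (at t)"
      using 1 2 3 z' by simp
  next
    show "continuous_on U (\<lambda>(x, t). - phixx x t)"
      using continuous_on_minus[OF U(4)] by (simp add: case_prod_beta)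
  next
    show "continuous_on U (\<lambda>(x, t). - phit x t)"
      using continuous_on_minus[OF U(5)] by (simp add: case_prod_beta)
  qed (use U in auto)
qed

theorem lemma3p3:
  fixes F :: "real^'n \<Rightarrow> real \<Rightarrow> real \<Rightarrow> real^'n \<Rightarrow> real^'n^'n \<Rightarrow> real"
    and b c :: "real^'n \<Rightarrow> real \<Rightarrow> real"
    and u :: "real^'n \<Rightarrow> real \<Rightarrow> real"
    and eta x0 :: "real^'n"
    and lam Lam R t1 t2 M :: real
  defines "D \<equiv> inclined_cyl eta x0 R t1 t2"
  assumes lam: "0 < lam" "lam \<le> Lam"
    and S: "structure_S F lam Lam b c D"
    and b: "\<forall>(x, t)\<in>D. 0 \<le> b x t" "bounded ((\<lambda>(x, t). b x t) ` D)" "continuous_on D (\<lambda>(x, t). b x t)"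
    and c: "\<forall>(x, t)\<in>D. c x t \<le> 0" "bounded ((\<lambda>(x, t). c x t) ` D)" "continuous_on D (\<lambda>(x, t). c x t)"
    and F0: "\<forall>(x, t)\<in>D. F x t 0 0 0 = 0"
    and R: "0 < R" and t12: "t1 < t2"
    and ucont: "continuous_on D (\<lambda>(x, t). u x t)"
  shows "(visc_subsol F D u \<and> u (x0 + (t2 - t1) *\<^sub>R eta) t2 = M \<and> (\<forall>(x, t)\<in>D. u x t \<le> M) \<and> 0 \<le> M
            \<longrightarrow> (\<forall>t. t1 < t \<and> t < t2 \<longrightarrow> u (x0 + (t - t1) *\<^sub>R eta) t = M))
       \<and> (visc_supersol F D u \<and> u (x0 + (t2 - t1) *\<^sub>R eta) t2 = M \<and> (\<forall>(x, t)\<in>D. M \<le> u x t) \<and> M \<le> 0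
            \<longrightarrow> (\<forall>t. t1 < t \<and> t < t2 \<longrightarrow> u (x0 + (t - t1) *\<^sub>R eta) t = M))"
proof -
  obtain Bb where Bb: "\<forall>z\<in>(\<lambda>(x, t). b x t) ` D. norm z \<le> Bb" using b(2) bounded_iff by blast
  obtain Cc where Cc: "\<forall>z\<in>(\<lambda>(x, t). c x t) ` D. norm z \<le> Cc" using c(2) bounded_iff by blast
  have bB: "\<forall>(x, t)\<in>D. b x t \<le> Bb" using Bb by fastforce
  have cC: "\<forall>(x, t)\<in>D. - c x t \<le> Cc" using Cc by fastforce
  have part1: "u (x0 + (t - t1) *\<^sub>R eta) t = M"
    if "visc_subsol F D u" "u (x0 + (t2 - t1) *\<^sub>R eta) t2 = M" "\<forall>(x, t)\<in>D. u x t \<le> M" "0 \<le> M"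
       "t1 < t" "t < t2" "continuous_on D (\<lambda>(x, t). u x t)"
       "structure_S F lam Lam b c D" "\<forall>(x, t)\<in>D. F x t 0 0 0 = 0"
    for F u M t
    using core[OF meta_eq_to_obj_eq[OF D_def] lam that(8) b(1) bB c(1) cC that(9) R t12 that(7) that(1-4) that(5,6)] .
  define G where "G x t r p X = - F x t (- r) (- p) (- X)" for x t r p X
  have SG: "structure_S G lam Lam b c D"
    unfolding structure_S_def
  proof (intro allI impI)
    fix x :: "real^'n" and t r s :: real and p q :: "real^'n" and M N :: "real^'n^'n"
    assume xt: "(x, t) \<in> D" and sM: "sym_mat M" and sN: "sym_mat N" and pN: "psd_mat N"
    have sM': "sym_mat (- M - N)" using sM sN by (simp add: sym_mat_def transpose_def vec_eq_iff)
    note h = S[unfolded structure_S_def, rule_format, OF xt sM' sN pN, where r="-s" and s="-r" and p="-q" and q="-p"]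
    have e1: "- M - N + N = - M" by simp
    have e2: "- (M + N) = - M - N" by simp
    have e3: "norm (- q - - p) = norm (p - q)" by (simp add: norm_minus_commute)
    have e4: "c x t * (- s - - r) = c x t * (r - s)" by simp
    show "lam * trace N - b x t * norm (p - q) + c x t * (r - s) \<le> G x t r p (M + N) - G x t s q M \<and>
       G x t r p (M + N) - G x t s q M \<le> Lam * trace N + b x t * norm (p - q) + c x t * (r - s)"
      using h unfolding G_def e1 e2 e3 e4 by linarith
  qed
  have G0: "\<forall>(x, t)\<in>D. G x t 0 0 0 = 0" using F0 by (auto simp: G_def)
  have vG: "visc_subsol G D (\<lambda>x t. - u x t)" if "visc_supersol F D u"
    unfolding visc_subsol_def
  proof (intro allI impI)
    fix x0 t0 phi phix phixx phit
    assume in0: "(x0, t0) \<in> D" and C: "C21_at phi phix phixx phit (x0, t0)"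
      and mx: "\<exists>e>0. \<forall>x t. (x, t) \<in> D \<longrightarrow> dist (x, t) (x0, t0) < e \<longrightarrow>
                - u x t - phi x t \<le> - u x0 t0 - phi x0 t0"
    have mn: "\<exists>e>0. \<forall>x t. (x, t) \<in> D \<longrightarrow> dist (x, t) (x0, t0) < e \<longrightarrow>
                u x t - (- phi x t) \<ge> u x0 t0 - (- phi x0 t0)"
      using mx by (metis (no_types, lifting) minus_diff_eq neg_le_iff_le diff_minus_eq_add add.commute)
    have "F x0 t0 (u x0 t0) (- phix x0 t0) (- phixx x0 t0) - (- phit x0 t0) \<le> 0"
      using that[unfolded visc_supersol_def, rule_format, OF in0 C21_neg[OF C]] mn by blast
    then show "G x0 t0 (- u x0 t0) (phix x0 t0) (phixx x0 t0) - phit x0 t0 \<ge> 0"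
      by (simp add: G_def)
  qed
  have ucn: "continuous_on D (\<lambda>(x, t). - u x t)"
    using continuous_on_minus[OF ucont] by (simp add: case_prod_beta)
  show ?thesis
  proof (intro conjI impI allI)
    fix t assume "visc_subsol F D u \<and> u (x0 + (t2 - t1) *\<^sub>R eta) t2 = M \<and> (\<forall>(x, t)\<in>D. u x t \<le> M) \<and> 0 \<le> M"
      and "t1 < t \<and> t < t2"
    then show "u (x0 + (t - t1) *\<^sub>R eta) t = M" using part1[of F u M t] ucont S F0 by blast
  next
    fix t assume a: "visc_supersol F D u \<and> u (x0 + (t2 - t1) *\<^sub>R eta) t2 = M \<and> (\<forall>(x, t)\<in>D. M \<le> u x t) \<and> M \<le> 0"
      and tt: "t1 < t \<and> t < t2"
    have le': "\<forall>(x, t)\<in>D. - u x t \<le> - M" using a by auto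
    have "- u (x0 + (t - t1) *\<^sub>R eta) t = - M"
      using part1[of G "\<lambda>x t. - u x t" "- M" t] vG a le' tt ucn SG G0 by auto
    then show "u (x0 + (t - t1) *\<^sub>R eta) t = M" by simp
  qed
qed

end
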